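(* Let $b_0\ge1$ be an integer, $m>1$, and $0<\gamma<1/m$, and set $\alpha=-(\log\gamma)/\log m$. Let $B_0,B_1,\dots$ be independent random variables with $B_k$ uniformly distributed on the interval $[0,2b_0m^k-1]$ (mean $b_0m^k-1/2$), and let $\kappa$ be an independent random variable on $\{0,1,2,\dots\}$ with $\mathbb{P}[\kappa=k]=\gamma^k-\gamma^{k+1}$. Let $\Omega=\sum_{k=0}^{\kappa}B_k$. Then $\Omega$ has a wide-sense heavy-tailed distribution. Moreover, for real $c\ge 0$, $\mathbb{E}[\Omega^c]$ is infinite if $c\ge\alpha$ and finite if $0\le c<\alpha$.
   Context: This is the per-packet backoff of IEEE 802.11 with infinitely many backoff stages ($K=\infty$), multiplicative factor $m$, initial contention window $2b_0$ and collision probability $\gamma$ (which in the model satisfies $\gamma<1/m$, so $\alpha>1$). A random variable with density $f$ on $[0,\infty)$ is called wide-sense heavy-tailed if $\int_0^\infty e^{tx}f(x)\,dx=\infty$ for all $t>0$. *)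

theory Defs
  imports "HOL-Probability.Probability"
begin

definition wide_sense_heavy_tailed :: "'a measure \<Rightarrow> ('a \<Rightarrow> real) \<Rightarrow> bool" where
  "wide_sense_heavy_tailed M X \<longleftrightarrow>
     (\<exists>f. distributed M lborel X f \<and> (\<forall>x<0. f x = 0) \<and>
          (\<forall>t>0. (\<integral>\<^sup>+ x. indicator {0..} x * ennreal (exp (t * x)) * f x \<partial>lborel) = \<infinity>))"

end

theory Submission
  imports Defs
begin


lemma unif_AE:
  assumes "X \<in> borel_measurable M" "distr M lborel X = uniform_measure lborel {0..(a::real)}"
  shows "AE \<omega> in M. 0 \<le> X \<omega> \<and> X \<omega> \<le> a"
proof -
  have "AE x in distr M lborel X. 0 \<le> x \<and> x \<le> a"
    unfolding assms(2) by (rule AE_uniform_measureI) auto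
  moreover have "X \<in> measurable M lborel" using assms(1) by simp
  ultimately show ?thesis by (rule AE_distrD[rotated])
qed

lemma unif_half:
  assumes "X \<in> borel_measurable M" "distr M lborel X = uniform_measure lborel {0..(a::real)}" "a > 0"
  shows "emeasure M {\<omega>\<in>space M. a/2 \<le> X \<omega>} = 1/2"
proof -
  have "emeasure M {\<omega>\<in>space M. a/2 \<le> X \<omega>} = emeasure (distr M lborel X) {a/2..}"
    using assms(1) by (subst emeasure_distr) (auto intro!: arg_cong[where f="emeasure M"])
  also have "\<dots> = emeasure lborel ({0..a} \<inter> {a/2..}) / emeasure lborel {0..a}"
    unfolding assms(2) by (rule emeasure_uniform_measure) auto
  also have "{0..a} \<inter> {a/2..} = {a/2..a}" using assms(3) by auto
  also have "emeasure lborel {a/2..a} / emeasure lborel {0..a} = ennreal (a/2) / ennreal a"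
    using assms(3) by simp
  also have "\<dots> = 1/2" using assms(3)
    by (subst divide_ennreal) (auto simp: ennreal_divide_numeral divide_ennreal_def)
  finally show ?thesis .
qed



lemma translate_null:
  fixes N :: "real set"
  assumes "N \<in> null_sets lborel"
  shows "{x. x + y \<in> N} \<in> null_sets lborel"
proof -
  have Nb: "N \<in> sets borel" using assms by (auto simp: null_sets_def)
  have "emeasure lborel ((+) y -` N \<inter> space lborel) = emeasure (distr lborel borel ((+) y)) N"
    using Nb by (subst emeasure_distr) auto
  also have "\<dots> = 0" using assms by (simp add: lborel_distr_plus null_setsD1)
  finally have "emeasure lborel {x. x + y \<in> N} = 0"
    by (simp add: vimage_def add.commute)
  moreover have "{x. x + y \<in> N} \<in> sets borel"
    using Nb by measurable
  ultimately show ?thesis by (auto simp: null_sets_def)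
qed

lemma null_sum:
  assumes "prob_space M" "prob_space.indep_var M borel X borel Y"
   "distr M lborel X = uniform_measure lborel {0..(a::real)}" "a>0"
   "N \<in> null_sets lborel"
  shows "{\<omega>\<in>space M. X \<omega> + Y \<omega> \<in> N} \<in> null_sets M"
proof -
  interpret prob_space M by fact
  have rvX: "random_variable borel X" and rvY: "random_variable borel (Y::_\<Rightarrow>real)"
    using assms(2) by (blast dest: indep_var_rv1 indep_var_rv2)+
  have eq: "distr M borel X \<Otimes>\<^sub>M distr M borel Y = distr M (borel \<Otimes>\<^sub>M borel) (\<lambda>x. (X x, Y x))"
    using assms(2) indep_var_distribution_eq by blast
  interpret DX: prob_space "distr M borel X" by (rule prob_space_distr) fact
  interpret DY: prob_space "distr M borel Y" by (rule prob_space_distr) fact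
  interpret DXY: pair_prob_space "distr M borel X" "distr M borel Y" ..
  have Nb[measurable]: "N \<in> sets borel" using assms(5) by (auto simp: null_sets_def)
  define A where "A = {p::real\<times>real. fst p + snd p \<in> N}"
  have A: "A \<in> sets (borel \<Otimes>\<^sub>M borel)"
  proof -
    have "{p \<in> space (borel \<Otimes>\<^sub>M borel). fst p + snd p \<in> N} \<in> sets (borel \<Otimes>\<^sub>M (borel::real measure))"
      by measurable
    then show ?thesis by (simp add: A_def space_pair_measure)
  qed
  have "emeasure M {\<omega>\<in>space M. X \<omega> + Y \<omega> \<in> N} = emeasure (distr M (borel \<Otimes>\<^sub>M borel) (\<lambda>x. (X x, Y x))) A"
    using A rvX rvY by (subst emeasure_distr) (auto simp: A_def intro!: arg_cong[where f="emeasure M"])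
  also have "\<dots> = emeasure (distr M borel X \<Otimes>\<^sub>M distr M borel Y) A" by (simp add: eq)
  also have "\<dots> = (\<integral>\<^sup>+y. emeasure (distr M borel X) ((\<lambda>x. (x, y)) -` A) \<partial>distr M borel Y)"
    using A by (subst DXY.emeasure_pair_measure_alt2) auto
  also have "\<dots> = (\<integral>\<^sup>+y. 0 \<partial>distr M borel Y)"
  proof (rule nn_integral_cong)
    fix y
    have DXu: "distr M borel X = uniform_measure lborel {0..a}"
      using assms(3) by (metis distr_cong sets_lborel)
    have S: "{x. x + y \<in> N} \<in> null_sets lborel" by (rule translate_null) fact
    have "(\<lambda>x. (x, y)) -` A = {x. x + y \<in> N}" by (auto simp: A_def)
    moreover have "emeasure lborel ({0..a} \<inter> {x. x + y \<in> N}) = 0"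
    proof -
      have "{0..a} \<inter> {x. x + y \<in> N} \<in> null_sets lborel"
        by (rule null_sets_subset[OF S]) (use S in auto)
      then show ?thesis by (rule null_setsD1)
    qed
    ultimately show "emeasure (distr M borel X) ((\<lambda>x. (x, y)) -` A) = 0"
      using S by (simp add: DXu null_setsD2)
  qed
  moreover have "{\<omega>\<in>space M. X \<omega> + Y \<omega> \<in> N} \<in> events"
  proof -
    have [measurable]: "X \<in> borel_measurable M" "Y \<in> borel_measurable M" using rvX rvY by auto
    show ?thesis by measurable
  qed
  ultimately show ?thesis by (auto simp: null_sets_def)
qed



lemma mk_powr: "(m::real) > 0 \<Longrightarrow> (m ^ k) powr c = (m powr c) ^ k"
  by (simp add: powr_realpow[symmetric] powr_powr powr_power mult.commute)

lemma geom_le: assumes "(m::real) > 1" shows "(\<Sum>k\<in>{0..n}. m ^ k) \<le> m ^ (n+1) / (m - 1)"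
proof -
  have "(\<Sum>k\<in>{0..n}. m ^ k) * (m - 1) = m ^ (n+1) - 1"
    by (induction n) (auto simp: algebra_simps)
  then have "(\<Sum>k\<in>{0..n}. m ^ k) = (m ^ (n+1) - 1) / (m - 1)"
    using assms by (simp add: eq_divide_eq)
  also have "\<dots> \<le> m ^ (n+1) / (m - 1)" using assms by (simp add: divide_right_mono)
  finally show ?thesis .
qed

lemma exp_ge_pow: assumes "y \<ge> 0" "n > 0" shows "(y / real n) ^ n \<le> exp (y::real)"
proof -
  have yn: "0 \<le> y / real n" using assms by simp
  have "(y / real n) ^ n \<le> (1 + y / real n) ^ n"
    by (rule power_mono) (use yn in linarith)+
  also have "\<dots> \<le> exp (y / real n) ^ n"
    by (rule power_mono) (use yn exp_ge_add_one_self[of "y / real n"] in linarith)+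
  also have "\<dots> = exp (real n * (y / real n))" by (rule exp_of_nat_mult[symmetric])
  also have "\<dots> = exp y" using assms by simp
  finally show ?thesis .
qed

lemma suminf_top:
  assumes "\<And>k. f k \<ge> (d::real)" "d > 0"
  shows "(\<Sum>k. ennreal (f k)) = \<infinity>"
proof -
  have nn: "f k \<ge> 0" for k using assms(1)[of k] assms(2) by linarith
  have "\<not> summable f"
  proof
    assume "summable f"
    then have "f \<longlonglongrightarrow> 0" by (rule summable_LIMSEQ_zero)
    then have "eventually (\<lambda>k. f k < d) sequentially"
      using assms(2) by (rule order_tendstoD(2))
    then obtain k where "f k < d" by (metis eventually_happens' sequentially_bot)
    with assms(1)[of k] show False by linarith
  qed
  then have "(\<Sum>k. ennreal (f k)) = top" using summable_iff_suminf_neq_top[of f] nn by blast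
  then show ?thesis by simp
qed



theorem theorem2:
  fixes M :: "'a measure" and b0 :: nat and m \<gamma> \<alpha> :: real
    and B :: "nat \<Rightarrow> 'a \<Rightarrow> real" and \<kappa> :: "'a \<Rightarrow> nat" and \<Omega> :: "'a \<Rightarrow> real"
  assumes "prob_space M"
    and "b0 \<ge> 1" and "m > 1" and "0 < \<gamma>" and "\<gamma> < 1 / m"
    and "\<alpha> = - ln \<gamma> / ln m"
    and "\<And>k. B k \<in> borel_measurable M"
    and "\<And>k. distr M lborel (B k) = uniform_measure lborel {0 .. 2 * real b0 * m ^ k - 1}"
    and "\<kappa> \<in> measurable M (count_space UNIV)"
    and "\<And>k. measure M {\<omega> \<in> space M. \<kappa> \<omega> = k} = \<gamma> ^ k - \<gamma> ^ (k + 1)"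
    and "prob_space.indep_vars M (\<lambda>_. borel)
           (\<lambda>i. case i of None \<Rightarrow> (\<lambda>\<omega>. real (\<kappa> \<omega>)) | Some k \<Rightarrow> B k) UNIV"
    and "\<And>\<omega>. \<Omega> \<omega> = (\<Sum>k\<in>{0..\<kappa> \<omega>}. B k \<omega>)"
  shows "wide_sense_heavy_tailed M \<Omega> \<and>
         (\<forall>c::real. c \<ge> \<alpha> \<longrightarrow> (\<integral>\<^sup>+ \<omega>. ennreal (\<Omega> \<omega> powr c) \<partial>M) = \<infinity>) \<and>
         (\<forall>c::real. 0 \<le> c \<and> c < \<alpha> \<longrightarrow> (\<integral>\<^sup>+ \<omega>. ennreal (\<Omega> \<omega> powr c) \<partial>M) < \<infinity>)"
proof -
  interpret prob_space M by fact
  define L where "L k = 2 * real b0 * m ^ k - 1" for k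
  have m1: "1 < m" by fact
  have mk1: "1 \<le> m ^ k" for k using m1 by simp
  have b1: "1 \<le> real b0" using assms(2) by simp
  have L1: "m ^ k \<le> L k" for k
  proof -
    have "2 * m ^ k \<le> 2 * real b0 * m ^ k" using b1 mk1[of k] by simp
    then show ?thesis using mk1[of k] unfolding L_def by linarith
  qed
  have Lpos: "0 < L k" for k using L1[of k] mk1[of k] by linarith
  have Lle: "L k \<le> 2 * real b0 * m ^ k" for k by (simp add: L_def)
  have Bm[measurable]: "B k \<in> borel_measurable M" for k using assms(7) by auto
  have km[measurable]: "\<kappa> \<in> measurable M (count_space UNIV)" by fact
  have Bd: "distr M lborel (B k) = uniform_measure lborel {0..L k}" for k
    using assms(8) by (simp add: L_def)
  have \<Omega>eq: "\<Omega> = (\<lambda>\<omega>. \<Sum>k\<in>{0..\<kappa> \<omega>}. B k \<omega>)" using assms(12) by auto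
  have \<Omega>m[measurable]: "\<Omega> \<in> borel_measurable M"
    unfolding \<Omega>eq by (rule measurable_compose_countable[of "\<lambda>n \<omega>. \<Sum>k\<in>{0..n}. B k \<omega>" _ _ \<kappa>]) auto
  have AEB: "AE \<omega> in M. \<forall>k. 0 \<le> B k \<omega> \<and> B k \<omega> \<le> L k"
    using unif_AE[OF Bm Bd] by (simp add: AE_all_countable)
  define D where "D = 2 * real b0 * m / (m - 1)"
  have AE\<Omega>: "AE \<omega> in M. 0 \<le> \<Omega> \<omega> \<and> B (\<kappa> \<omega>) \<omega> \<le> \<Omega> \<omega> \<and> \<Omega> \<omega> \<le> D * m ^ \<kappa> \<omega> \<and> (\<forall>k. 0 \<le> B k \<omega>)"
    using AEB
  proof eventually_elim
    case (elim \<omega>)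
    have s1: "0 \<le> \<Omega> \<omega>" unfolding assms(12) using elim by (intro sum_nonneg) auto
    have s2: "B (\<kappa> \<omega>) \<omega> \<le> \<Omega> \<omega>" unfolding assms(12) using elim
      by (intro member_le_sum) auto
    have "\<Omega> \<omega> \<le> (\<Sum>k\<in>{0..\<kappa> \<omega>}. 2 * real b0 * m ^ k)" unfolding assms(12)
      using elim Lle by (intro sum_mono) (meson order_trans)
    also have "\<dots> = 2 * real b0 * (\<Sum>k\<in>{0..\<kappa> \<omega>}. m ^ k)" by (simp add: sum_distrib_left)
    also have "\<dots> \<le> 2 * real b0 * (m ^ (\<kappa> \<omega> + 1) / (m - 1))"
      using geom_le[OF m1, of "\<kappa> \<omega>"] by (intro mult_left_mono) auto
    also have "\<dots> = D * m ^ \<kappa> \<omega>" by (simp add: D_def)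
    finally show ?case using s1 s2 elim by auto
  qed
  have lnm: "0 < ln m" using m1 by simp
  have \<gamma>1: "\<gamma> < 1"
  proof -
    have "1/m < 1" using m1 by simp
    then show ?thesis using assms(5) by linarith
  qed
  have \<alpha>1: "\<alpha> > 1"
  proof -
    have "ln \<gamma> < ln (1/m)" using assms(4,5) m1 by (subst ln_less_cancel_iff) auto
    then have "ln m < - ln \<gamma>" using m1 by (simp add: ln_div)
    then have "1 < (- ln \<gamma>) / ln m" using lnm by (simp only: less_divide_eq_1_pos)
    then show ?thesis using assms(6) by simp
  qed
  have part2: "\<forall>c::real. c \<ge> \<alpha> \<longrightarrow> (\<integral>\<^sup>+ \<omega>. ennreal (\<Omega> \<omega> powr c) \<partial>M) = \<infinity>"
  proof (intro allI impI)
    fix c :: real assume c\<alpha>: "c \<ge> \<alpha>"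
    then have c0: "c > 0" using \<alpha>1 by linarith
    define q where "q = m powr c"
    have q\<gamma>: "1 \<le> q * \<gamma>"
    proof -
      have "(- ln \<gamma>) / ln m \<le> c" using c\<alpha> assms(6) by simp
      then have "- ln \<gamma> \<le> c * ln m" by (simp only: pos_divide_le_eq[OF lnm])
      then have "0 \<le> c * ln m + ln \<gamma>" by linarith
      then have "1 \<le> exp (c * ln m + ln \<gamma>)" by simp
      also have "\<dots> = q * \<gamma>" using m1 assms(4) by (simp add: q_def powr_def exp_add)
      finally show ?thesis .
    qed
    define E where "E k = {\<omega>\<in>space M. \<kappa> \<omega> = k \<and> L k / 2 \<le> B k \<omega>}" for k
    have Em[measurable]: "E k \<in> sets M" for k unfolding E_def by measurable
    have disj: "disjoint_family E" by (auto simp: disjoint_family_on_def E_def)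
    have Eprob: "emeasure M (E k) = ennreal ((\<gamma> ^ k - \<gamma> ^ (k + 1)) * (1/2))" for k
    proof -
      let ?X = "\<lambda>i. case i of None \<Rightarrow> (\<lambda>\<omega>. real (\<kappa> \<omega>)) | Some j \<Rightarrow> B j"
      let ?A = "\<lambda>i::nat option. case i of None \<Rightarrow> {real k} | Some j \<Rightarrow> {L k / 2..}"
      have "prob (\<Inter>i\<in>{None, Some k}. ?X i -` ?A i \<inter> space M) = (\<Prod>i\<in>{None, Some k}. prob (?X i -` ?A i \<inter> space M))"
        by (rule indep_varsD[OF assms(11)]) (auto split: option.split)
      moreover have "(\<Inter>i\<in>{None, Some k}. ?X i -` ?A i \<inter> space M) = E k"
        by (auto simp: E_def)
      moreover have "?X None -` ?A None \<inter> space M = {\<omega>\<in>space M. \<kappa> \<omega> = k}" by auto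
      moreover have "?X (Some k) -` ?A (Some k) \<inter> space M = {\<omega>\<in>space M. L k / 2 \<le> B k \<omega>}" by auto
      moreover have "prob {\<omega>\<in>space M. L k / 2 \<le> B k \<omega>} = 1/2"
      proof -
        have h: "(1/2::ennreal) = ennreal (1/2)" using divide_ennreal[of 1 2] by simp
        have e: "emeasure M {\<omega>\<in>space M. L k / 2 \<le> B k \<omega>} = ennreal (1/2)"
          using unif_half[OF Bm Bd Lpos, of k] unfolding h .
        show ?thesis unfolding measure_def e by (simp del: ennreal_half)
      qed
      ultimately have "prob (E k) = (\<gamma> ^ k - \<gamma> ^ (k + 1)) * (1/2)"
        using assms(10)[of k] by simp
      then show ?thesis by (simp only: emeasure_eq_measure)
    qed
    define a where "a k = (L k / 2) powr c" for k
    have "\<infinity> = (\<Sum>k. ennreal (a k * ((\<gamma> ^ k - \<gamma> ^ (k + 1)) * (1/2))))"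
    proof (rule suminf_top[symmetric])
      show "0 < (1 - \<gamma>) / 2 / 2 powr c" using \<gamma>1 by simp
    next
      fix k
      have ak: "q ^ k / 2 powr c \<le> a k"
      proof -
        have "q ^ k / 2 powr c = (m ^ k / 2) powr c"
          using m1 by (simp add: powr_divide mk_powr q_def)
        also have "\<dots> \<le> a k" unfolding a_def using L1[of k] mk1[of k] c0
          by (intro powr_mono2) auto
        finally show ?thesis .
      qed
      define d where "d = (1 - \<gamma>) / 2 / 2 powr c"
      have dnn: "0 \<le> d" using \<gamma>1 by (simp add: d_def)
      have g1: "1 \<le> (q * \<gamma>) ^ k" by (rule one_le_power) fact
      have "d \<le> (q * \<gamma>) ^ k * d" using mult_right_mono[OF g1 dnn] by simp
      also have "\<dots> = (q ^ k / 2 powr c) * (\<gamma> ^ k * (1 - \<gamma>) / 2)"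
        by (simp add: d_def power_mult_distrib field_simps)
      also have "\<dots> \<le> a k * (\<gamma> ^ k * (1 - \<gamma>) / 2)"
        by (rule mult_right_mono[OF ak]) (use \<gamma>1 assms(4) in simp)
      also have "\<dots> = a k * ((\<gamma> ^ k - \<gamma> ^ (k + 1)) * (1/2))" by (simp add: field_simps)
      finally show "(1 - \<gamma>) / 2 / 2 powr c \<le> a k * ((\<gamma> ^ k - \<gamma> ^ (k + 1)) * (1/2))"
        by (simp add: d_def)
    qed
    also have "\<dots> = (\<Sum>k. \<integral>\<^sup>+\<omega>. ennreal (a k) * indicator (E k) \<omega> \<partial>M)"
    proof (rule suminf_cong)
      fix k
      have a0: "a k \<ge> 0" by (simp add: a_def)
      have "\<gamma> ^ (k+1) \<le> \<gamma> ^ k" using \<gamma>1 assms(4) by (simp add: power_decreasing)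
      then have nn2: "0 \<le> (\<gamma> ^ k - \<gamma> ^ (k + 1)) * (1/2)" by simp
      show "ennreal (a k * ((\<gamma> ^ k - \<gamma> ^ (k + 1)) * (1/2))) = (\<integral>\<^sup>+\<omega>. ennreal (a k) * indicator (E k) \<omega> \<partial>M)"
        by (simp only: nn_integral_cmult_indicator[OF Em] Eprob ennreal_mult[OF a0 nn2])
    qed
    also have "\<dots> = (\<integral>\<^sup>+\<omega>. (\<Sum>k. ennreal (a k) * indicator (E k) \<omega>) \<partial>M)"
      by (rule nn_integral_suminf[symmetric]) auto
    also have "\<dots> \<le> (\<integral>\<^sup>+\<omega>. ennreal (\<Omega> \<omega> powr c) \<partial>M)"
    proof (rule nn_integral_mono_AE)
      show "AE \<omega> in M. (\<Sum>k. ennreal (a k) * indicator (E k) \<omega>) \<le> ennreal (\<Omega> \<omega> powr c)"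
        using AE\<Omega>
      proof eventually_elim
        case (elim \<omega>)
        show ?case
        proof (cases "\<omega> \<in> E (\<kappa> \<omega>)")
          case True
          then have "(\<Sum>k. ennreal (a k) * indicator (E k) \<omega>) = ennreal (a (\<kappa> \<omega>))"
            by (rule suminf_cmult_indicator[OF disj])
          also have "\<dots> \<le> ennreal (\<Omega> \<omega> powr c)"
          proof (rule ennreal_leI)
            have "L (\<kappa> \<omega>) / 2 \<le> \<Omega> \<omega>" using True elim by (auto simp: E_def)
            then show "a (\<kappa> \<omega>) \<le> \<Omega> \<omega> powr c" unfolding a_def using Lpos[of "\<kappa> \<omega>"] c0
              by (intro powr_mono2) auto
          qed
          finally show ?thesis .
        next
          case False
          then have "\<omega> \<notin> E k" for k by (auto simp: E_def)
          then show ?thesis by simp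
        qed
      qed
    qed
    finally show "(\<integral>\<^sup>+ \<omega>. ennreal (\<Omega> \<omega> powr c) \<partial>M) = \<infinity>"
      by (simp add: top_unique)
  qed
  have part3: "\<forall>c::real. 0 \<le> c \<and> c < \<alpha> \<longrightarrow> (\<integral>\<^sup>+ \<omega>. ennreal (\<Omega> \<omega> powr c) \<partial>M) < \<infinity>"
  proof (intro allI impI)
    fix c :: real assume cc: "0 \<le> c \<and> c < \<alpha>"
    define q where "q = m powr c"
    have q0: "0 < q" using m1 by (simp add: q_def)
    have q\<gamma>: "q * \<gamma> < 1"
    proof -
      have "c < (- ln \<gamma>) / ln m" using cc assms(6) by simp
      then have "c * ln m < - ln \<gamma>" by (simp only: pos_less_divide_eq[OF lnm])
      then have "c * ln m + ln \<gamma> < 0" by linarith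
      then have "exp (c * ln m + ln \<gamma>) < 1" by simp
      also have "exp (c * ln m + ln \<gamma>) = q * \<gamma>" using m1 assms(4) by (simp add: q_def powr_def exp_add)
      finally show ?thesis .
    qed
    define K where "K k = {\<omega>\<in>space M. \<kappa> \<omega> = k}" for k
    have Km[measurable]: "K k \<in> sets M" for k unfolding K_def by measurable
    have disj: "disjoint_family K" by (auto simp: disjoint_family_on_def K_def)
    have Kprob: "emeasure M (K k) = ennreal (\<gamma> ^ k - \<gamma> ^ (k + 1))" for k
      using assms(10)[of k] by (simp add: K_def emeasure_eq_measure)
    define Dc where "Dc = D powr c"
    have Dc0: "0 \<le> Dc" by (simp add: Dc_def)
    have "(\<integral>\<^sup>+ \<omega>. ennreal (\<Omega> \<omega> powr c) \<partial>M) \<le> (\<integral>\<^sup>+ \<omega>. (\<Sum>k. ennreal (Dc * q ^ k) * indicator (K k) \<omega>) \<partial>M)"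
    proof (rule nn_integral_mono_AE)
      show "AE \<omega> in M. ennreal (\<Omega> \<omega> powr c) \<le> (\<Sum>k. ennreal (Dc * q ^ k) * indicator (K k) \<omega>)"
        using AE\<Omega> AE_space
      proof eventually_elim
        case (elim \<omega>)
        then have "\<omega> \<in> K (\<kappa> \<omega>)" by (simp add: K_def)
        then have s: "(\<Sum>k. ennreal (Dc * q ^ k) * indicator (K k) \<omega>) = ennreal (Dc * q ^ \<kappa> \<omega>)"
          by (rule suminf_cmult_indicator[OF disj])
        have "\<Omega> \<omega> powr c \<le> (D * m ^ \<kappa> \<omega>) powr c"
          using elim cc by (intro powr_mono2) auto
        also have "\<dots> = Dc * q ^ \<kappa> \<omega>" using m1
          by (simp add: powr_mult Dc_def q_def mk_powr)
        finally show ?case unfolding s by (rule ennreal_leI)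
      qed
    qed
    also have "\<dots> = (\<Sum>k. \<integral>\<^sup>+\<omega>. ennreal (Dc * q ^ k) * indicator (K k) \<omega> \<partial>M)"
      by (rule nn_integral_suminf) auto
    also have "\<dots> = (\<Sum>k. ennreal (Dc * (1 - \<gamma>) * (q * \<gamma>) ^ k))"
    proof (rule suminf_cong)
      fix k
      have a0: "0 \<le> Dc * q ^ k" using Dc0 q0 by simp
      have "\<gamma> ^ (k+1) \<le> \<gamma> ^ k" using \<gamma>1 assms(4) by (simp add: power_decreasing)
      then have nn2: "0 \<le> \<gamma> ^ k - \<gamma> ^ (k + 1)" by simp
      have "(\<integral>\<^sup>+\<omega>. ennreal (Dc * q ^ k) * indicator (K k) \<omega> \<partial>M) = ennreal (Dc * q ^ k * (\<gamma> ^ k - \<gamma> ^ (k + 1)))"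
        by (simp only: nn_integral_cmult_indicator[OF Km] Kprob ennreal_mult[OF a0 nn2])
      also have "Dc * q ^ k * (\<gamma> ^ k - \<gamma> ^ (k + 1)) = Dc * (1 - \<gamma>) * (q * \<gamma>) ^ k"
        by (simp add: power_mult_distrib algebra_simps)
      finally show "(\<integral>\<^sup>+\<omega>. ennreal (Dc * q ^ k) * indicator (K k) \<omega> \<partial>M) = ennreal (Dc * (1 - \<gamma>) * (q * \<gamma>) ^ k)" .
    qed
    also have "\<dots> < \<infinity>"
    proof -
      have sm: "summable (\<lambda>k. Dc * (1 - \<gamma>) * (q * \<gamma>) ^ k)"
        using q\<gamma> q0 assms(4) by (intro summable_mult summable_geometric) auto
      have "(\<Sum>k. ennreal (Dc * (1 - \<gamma>) * (q * \<gamma>) ^ k)) \<noteq> top"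
        by (rule ennreal_suminf_neq_top[OF sm]) (use Dc0 \<gamma>1 q0 assms(4) in simp)
      then show ?thesis by (simp add: less_top)
    qed
    finally show "(\<integral>\<^sup>+ \<omega>. ennreal (\<Omega> \<omega> powr c) \<partial>M) < \<infinity>" .
  qed
  have part1: "wide_sense_heavy_tailed M \<Omega>"
  proof -
    define S where "S n \<omega> = (\<Sum>k\<in>{1..n}. B k \<omega>)" for n \<omega>
    have Sm[measurable]: "S n \<in> borel_measurable M" for n unfolding S_def by measurable
    have ind: "indep_var borel (B 0) borel (S n)" for n
    proof -
      let ?X = "\<lambda>i. case i of None \<Rightarrow> (\<lambda>\<omega>. real (\<kappa> \<omega>)) | Some j \<Rightarrow> B j"
      have "indep_vars (\<lambda>_. borel) ?X (insert (Some 0) (Some ` {1..n}))"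
        by (rule indep_vars_subset[OF assms(11)]) auto
      then have "indep_var borel (?X (Some 0)) borel (\<lambda>\<omega>. \<Sum>i\<in>Some ` {1..n}. ?X i \<omega>)"
        by (intro indep_vars_sum) auto
      moreover have "(\<lambda>\<omega>. \<Sum>i\<in>Some ` {1..n}. ?X i \<omega>) = S n"
        by (auto simp: S_def sum.reindex)
      ultimately show ?thesis by simp
    qed
    have \<Omega>split: "\<Omega> \<omega> = B 0 \<omega> + S (\<kappa> \<omega>) \<omega>" for \<omega>
      by (simp add: assms(12) S_def sum.atLeast_Suc_atMost)
    have ac: "absolutely_continuous lborel (distr M lborel \<Omega>)"
      unfolding absolutely_continuous_def
    proof
      fix N :: "real set" assume N: "N \<in> null_sets lborel"
      have nn: "{\<omega>\<in>space M. B 0 \<omega> + S n \<omega> \<in> N} \<in> null_sets M" for n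
        by (rule null_sum[OF assms(1) ind Bd[of 0] Lpos N])
      have Nb: "N \<in> sets borel" using N by (auto simp: null_sets_def)
      have "\<Omega> -` N \<inter> space M \<in> null_sets M"
      proof (rule null_sets_subset[OF null_sets_UN[OF nn]])
        show "\<Omega> -` N \<inter> space M \<in> sets M" using Nb by (rule measurable_sets[OF \<Omega>m])
        show "\<Omega> -` N \<inter> space M \<subseteq> (\<Union>n. {\<omega>\<in>space M. B 0 \<omega> + S n \<omega> \<in> N})"
          by (auto simp: \<Omega>split)
      qed
      then show "N \<in> null_sets (distr M lborel \<Omega>)" using N
        by (subst null_sets_distr_iff) auto
    qed
    obtain f where fm[measurable]: "f \<in> borel_measurable lborel" and fd: "density lborel f = distr M lborel \<Omega>"
      using sigma_finite_measure.Radon_Nikodym[OF sigma_finite_lborel ac] by auto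
    define g where "g x = f x * indicator {0..} x" for x :: real
    have gm[measurable]: "g \<in> borel_measurable lborel" unfolding g_def by measurable
    have neg0: "emeasure M (\<Omega> -` {..<0} \<inter> space M) = 0"
    proof -
      have "AE \<omega> in M. \<not> \<Omega> \<omega> < 0" using AE\<Omega> by eventually_elim auto
      moreover have "\<Omega> -` {..<0} \<inter> space M \<in> sets M" by measurable
      ultimately show ?thesis by (subst (asm) AE_iff_measurable) auto
    qed
    have "(\<integral>\<^sup>+x. f x * indicator {..<0} x \<partial>lborel) = emeasure (density lborel f) {..<0}"
      by (simp add: emeasure_density)
    also have "\<dots> = 0" using neg0 by (simp add: fd emeasure_distr)
    finally have "AE x in lborel. f x * indicator {..<0} x = 0"
      by (subst (asm) nn_integral_0_iff_AE) auto
    then have "AE x in lborel. f x = g x"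
      by eventually_elim (auto simp: g_def indicator_def split: if_splits)
    then have fg: "density lborel g = density lborel f"
      by (intro density_cong) auto
    have dist: "distributed M lborel \<Omega> g"
      unfolding distributed_def using fg fd by simp
    have "(\<integral>\<^sup>+ x. indicator {0..} x * ennreal (exp (t * x)) * g x \<partial>lborel) = \<infinity>" if t: "t > 0" for t
    proof -
      have "(\<integral>\<^sup>+ x. indicator {0..} x * ennreal (exp (t * x)) * g x \<partial>lborel) = (\<integral>\<^sup>+ x. g x * ennreal (exp (t * x)) \<partial>lborel)"
        by (rule nn_integral_cong) (simp add: g_def indicator_def mult.commute)
      also have "\<dots> = (\<integral>\<^sup>+ x. ennreal (exp (t * x)) \<partial>density lborel g)"
        by (subst nn_integral_density) auto
      also have "\<dots> = (\<integral>\<^sup>+ x. ennreal (exp (t * x)) \<partial>distr M lborel \<Omega>)"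
        by (simp add: fg fd)
      also have "\<dots> = (\<integral>\<^sup>+ \<omega>. ennreal (exp (t * \<Omega> \<omega>)) \<partial>M)"
        by (rule nn_integral_distr) auto
      also have "\<dots> = \<infinity>"
      proof -
        obtain n :: nat where n: "\<alpha> \<le> real n" using real_arch_simple by blast
        then have n0: "n > 0" using \<alpha>1 by (cases n) auto
        have cpos: "0 < (t / real n) ^ n" using t n0 by simp
        have "\<infinity> = ennreal ((t / real n) ^ n) * (\<integral>\<^sup>+ \<omega>. ennreal (\<Omega> \<omega> powr real n) \<partial>M)"
          using part2 n cpos t n0 by (simp add: ennreal_mult_top)
        also have "\<dots> = (\<integral>\<^sup>+ \<omega>. ennreal ((t / real n) ^ n) * ennreal (\<Omega> \<omega> powr real n) \<partial>M)"
          by (rule nn_integral_cmult[symmetric]) auto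
        also have "\<dots> \<le> (\<integral>\<^sup>+ \<omega>. ennreal (exp (t * \<Omega> \<omega>)) \<partial>M)"
        proof (rule nn_integral_mono_AE)
          show "AE \<omega> in M. ennreal ((t / real n) ^ n) * ennreal (\<Omega> \<omega> powr real n) \<le> ennreal (exp (t * \<Omega> \<omega>))"
            using AE\<Omega>
          proof eventually_elim
            case (elim \<omega>)
            have "(t / real n) ^ n * \<Omega> \<omega> powr real n \<le> exp (t * \<Omega> \<omega>)"
            proof (cases "\<Omega> \<omega> = 0")
              case True then show ?thesis by simp
            next
              case False
              then have pos: "\<Omega> \<omega> > 0" using elim by auto
              have "(t / real n) ^ n * \<Omega> \<omega> powr real n = (t * \<Omega> \<omega> / real n) ^ n"
                using pos by (simp add: powr_realpow power_mult_distrib power_divide)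
              also have "\<dots> \<le> exp (t * \<Omega> \<omega>)"
                using pos t n0 by (intro exp_ge_pow) auto
              finally show ?thesis .
            qed
            then show ?case using cpos by (simp add: ennreal_mult[symmetric])
          qed
        qed
        finally show ?thesis by (simp add: top_unique)
      qed
      finally show ?thesis .
    qed
    then show ?thesis unfolding wide_sense_heavy_tailed_def using dist
      by (intro exI[of _ g]) (auto simp: g_def)
  qed
  show ?thesis using part1 part2 part3 by blast
qed

end
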